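(* Let $(b,c)$ be a weighted graph over $V$ and $m$ a measure on $V$ satisfying condition (A). Let $\alpha>0$, $p\in[1,\infty)$ and $u\in\ell^p(V,m)\cap\widetilde F$ with $(\widetilde L+\alpha)u\ge0$ on $V$. Then $u\ge0$. In particular, every $u\in\ell^p(V,m)\cap\widetilde F$ with $(\widetilde L+\alpha)u=0$ satisfies $u\equiv0$.
   Context: Let $V$ be a countably infinite set. A weighted graph over $V$ is a pair $(b,c)$ of maps $b:V\times V\to[0,\infty)$ and $c:V\to[0,\infty)$ with $b(x,x)=0$, $b(x,y)=b(y,x)$ and $\sum_{y\in V}b(x,y)<\infty$ for all $x,y\in V$. A measure on $V$ is a map $m:V\to(0,\infty)$; $\ell^p(V,m)$ is the space of real functions $u$ with $\sum_x m(x)|u(x)|^p<\infty$. Let $\widetilde F=\{u:V\to\mathbb R:\ \sum_y b(x,y)|u(y)|<\infty\text{ for all }x\}$ and define $\widetilde Lu(x)=\frac1{m(x)}\sum_y b(x,y)(u(x)-u(y))+\frac{c(x)}{m(x)}u(x)$ for $u\in\widetilde F$. Condition (A): for every sequence $(x_n)_{n\in\mathbb N}$ in $V$ with $b(x_n,x_{n+1})>0$ for all $n$, one has $\sum_{n\in\mathbb N}m(x_n)=\infty$. *)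

theory Defs
  imports "HOL-Analysis.Analysis"
begin

definition weighted_graph :: "('v \<Rightarrow> 'v \<Rightarrow> real) \<Rightarrow> ('v \<Rightarrow> real) \<Rightarrow> bool" where
  "weighted_graph b c \<longleftrightarrow>
     (\<forall>x y. b x y \<ge> 0) \<and> (\<forall>x. c x \<ge> 0) \<and> (\<forall>x. b x x = 0) \<and>
     (\<forall>x y. b x y = b y x) \<and> (\<forall>x. (\<lambda>y. b x y) summable_on UNIV)"

definition measure_on :: "('v \<Rightarrow> real) \<Rightarrow> bool" where
  "measure_on m \<longleftrightarrow> (\<forall>x. m x > 0)"

definition in_lp :: "real \<Rightarrow> ('v \<Rightarrow> real) \<Rightarrow> ('v \<Rightarrow> real) \<Rightarrow> bool" where
  "in_lp p m u \<longleftrightarrow> (\<lambda>x. m x * \<bar>u x\<bar> powr p) summable_on UNIV"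

definition in_Ftilde :: "('v \<Rightarrow> 'v \<Rightarrow> real) \<Rightarrow> ('v \<Rightarrow> real) \<Rightarrow> bool" where
  "in_Ftilde b u \<longleftrightarrow> (\<forall>x. (\<lambda>y. b x y * \<bar>u y\<bar>) summable_on UNIV)"

definition Ltilde :: "('v \<Rightarrow> 'v \<Rightarrow> real) \<Rightarrow> ('v \<Rightarrow> real) \<Rightarrow> ('v \<Rightarrow> real)
    \<Rightarrow> ('v \<Rightarrow> real) \<Rightarrow> 'v \<Rightarrow> real" where
  "Ltilde b c m u x = (1 / m x) * (\<Sum>\<^sub>\<infinity>y. b x y * (u x - u y)) + c x / m x * u x"

definition condition_A :: "('v \<Rightarrow> 'v \<Rightarrow> real) \<Rightarrow> ('v \<Rightarrow> real) \<Rightarrow> bool" where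
  "condition_A b m \<longleftrightarrow>
     (\<forall>xs :: nat \<Rightarrow> 'v. (\<forall>n. b (xs n) (xs (Suc n)) > 0) \<longrightarrow> \<not> summable (\<lambda>n. m (xs n)))"

end

theory Submission
  imports Defs
begin

lemma step_exists:
  assumes G: "weighted_graph b c" and M: "measure_on m" and alpha: "\<alpha> > 0"
    and H: "Ltilde b c m u x + \<alpha> * u x \<ge> 0" and neg: "u x < 0"
  shows "\<exists>y. b x y > 0 \<and> u y < u x"
proof (rule ccontr)
  assume nex: "\<not> ?thesis"
  have le: "b x y * (u x - u y) \<le> 0" for y
  proof (cases "b x y > 0")
    case True
    hence "u x \<le> u y" using nex by force
    thus ?thesis using True by (simp add: mult_nonneg_nonpos)
  next
    case False
    hence "b x y = 0" using G unfolding weighted_graph_def by (meson antisym not_le)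
    thus ?thesis by simp
  qed
  have "infsum (\<lambda>y. - (b x y * (u x - u y))) UNIV \<ge> 0"
    by (rule infsum_nonneg) (use le in auto)
  hence S: "(\<Sum>\<^sub>\<infinity>y. b x y * (u x - u y)) \<le> 0" by (simp add: infsum_uminus)
  have mx: "m x > 0" using M by (simp add: measure_on_def)
  have cx: "c x \<ge> 0" using G by (simp add: weighted_graph_def)
  have "(1 / m x) * (\<Sum>\<^sub>\<infinity>y. b x y * (u x - u y)) \<le> 0"
    using S mx by (simp add: divide_nonpos_pos)
  moreover have "c x / m x * u x \<le> 0" using cx mx neg
    by (intro mult_nonneg_nonpos) auto
  moreover have "\<alpha> * u x < 0" using alpha neg by (simp add: mult_pos_neg)
  ultimately show False using H unfolding Ltilde_def by linarith
qed

lemma core: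
  fixes b :: "'v \<Rightarrow> 'v \<Rightarrow> real" and c m u :: "'v \<Rightarrow> real"
  assumes G: "weighted_graph b c" and M: "measure_on m"
    and A: "condition_A b m"
    and alpha: "\<alpha> > 0" and p: "p \<ge> 1"
    and ulp: "in_lp p m u"
    and H: "\<forall>x. Ltilde b c m u x + \<alpha> * u x \<ge> 0"
  shows "u x0 \<ge> 0"
proof (rule ccontr)
  assume "\<not> u x0 \<ge> 0"
  hence x0: "u x0 < 0" by simp
  define nx where "nx = (\<lambda>x. SOME y. b x y > 0 \<and> u y < u x)"
  have nxp: "b x (nx x) > 0 \<and> u (nx x) < u x" if "u x < 0" for x
  proof -
    from step_exists[OF G M alpha H[rule_format, of x] that]
    show ?thesis unfolding nx_def by (rule someI_ex)
  qed
  define xs where "xs n = (nx ^^ n) x0" for n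
  have xsS: "xs (Suc n) = nx (xs n)" for n by (simp add: xs_def)
  have le0: "u (xs n) \<le> u x0" for n
  proof (induction n)
    case 0 then show ?case by (simp add: xs_def)
  next
    case (Suc n)
    hence "u (xs n) < 0" using x0 by linarith
    hence "u (xs (Suc n)) < u (xs n)" using nxp[of "xs n"] xsS[of n] by simp
    then show ?case using Suc by linarith
  qed
  have stp: "b (xs n) (xs (Suc n)) > 0 \<and> u (xs (Suc n)) < u (xs n)" for n
    using nxp[of "xs n"] le0[of n] x0 xsS[of n] by auto
  have dec: "n < k \<Longrightarrow> u (xs k) < u (xs n)" for n k
  proof (induction k)
    case 0 then show ?case by simp
  next
    case (Suc k)
    then show ?case using stp[of k] by (cases "n = k") (auto simp: less_Suc_eq)
  qed
  have inj: "inj xs"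
  proof (rule injI)
    fix a d assume "xs a = xs d"
    thus "a = d" using dec[of a d] dec[of d a] by (cases a d rule: linorder_cases) auto
  qed
  let ?g = "\<lambda>x. m x * \<bar>u x\<bar> powr p"
  have "?g summable_on UNIV" using ulp by (simp add: in_lp_def)
  hence "?g summable_on range xs" by (rule summable_on_subset_banach) auto
  hence "(?g \<circ> xs) summable_on UNIV" using summable_on_reindex[OF inj, of ?g] by simp
  hence sg: "summable (?g \<circ> xs)" by (rule summable_on_imp_summable)
  define K where "K = \<bar>u x0\<bar> powr p"
  have K: "K > 0" using x0 by (simp add: K_def)
  have sum1: "summable (\<lambda>n. (?g \<circ> xs) n / K)" using sg by (rule summable_divide)
  have bnd: "norm (m (xs n)) \<le> (?g \<circ> xs) n / K" for n
  proof -
    have mp: "m (xs n) > 0" using M by (simp add: measure_on_def)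
    have "\<bar>u x0\<bar> \<le> \<bar>u (xs n)\<bar>" using le0[of n] x0 by linarith
    hence "K \<le> \<bar>u (xs n)\<bar> powr p" unfolding K_def
      using powr_mono2[of p "\<bar>u x0\<bar>" "\<bar>u (xs n)\<bar>"] p by simp
    hence "m (xs n) * K \<le> m (xs n) * \<bar>u (xs n)\<bar> powr p"
      using mp by simp
    thus ?thesis using mp K by (simp add: pos_le_divide_eq)
  qed
  have "summable (\<lambda>n. m (xs n))"
    by (rule summable_comparison_test'[OF sum1, of 0]) (rule bnd)
  moreover have "\<not> summable (\<lambda>n. m (xs n))"
    using A stp unfolding condition_A_def by blast
  ultimately show False by contradiction
qed

theorem mainTheorem3:
  fixes b :: "'v \<Rightarrow> 'v \<Rightarrow> real" and c m u :: "'v \<Rightarrow> real"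
    and \<alpha> p :: real
  assumes V: "countable (UNIV :: 'v set)" "infinite (UNIV :: 'v set)"
    and G: "weighted_graph b c" and M: "measure_on m"
    and A: "condition_A b m"
    and alpha: "\<alpha> > 0" and p: "p \<ge> 1"
    and ulp: "in_lp p m u" and uF: "in_Ftilde b u"
  shows "((\<forall>x. Ltilde b c m u x + \<alpha> * u x \<ge> 0) \<longrightarrow> (\<forall>x. u x \<ge> 0))
       \<and> ((\<forall>x. Ltilde b c m u x + \<alpha> * u x = 0) \<longrightarrow> (\<forall>x. u x = 0))"
proof (intro conjI impI allI)
  fix x assume "\<forall>x. Ltilde b c m u x + \<alpha> * u x \<ge> 0"
  thus "u x \<ge> 0" using core[OF G M A alpha p ulp] by blast
next
  fix x assume H: "\<forall>x. Ltilde b c m u x + \<alpha> * u x = 0"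
  have "u x \<ge> 0" using core[OF G M A alpha p ulp] H by simp
  moreover have "(\<lambda>x. - u x) x \<ge> 0"
  proof (rule core[OF G M A alpha p])
    show "in_lp p m (\<lambda>x. - u x)" using ulp by (simp add: in_lp_def)
    have Lneg: "Ltilde b c m (\<lambda>x. - u x) y = - Ltilde b c m u y" for y
    proof -
      have "(\<Sum>\<^sub>\<infinity>z. b y z * (- u y - - u z)) = - (\<Sum>\<^sub>\<infinity>z. b y z * (u y - u z))"
        by (subst infsum_uminus[symmetric]) (simp add: algebra_simps)
      thus ?thesis unfolding Ltilde_def by simp
    qed
    show "\<forall>y. Ltilde b c m (\<lambda>x. - u x) y + \<alpha> * - u y \<ge> 0"
    proof
      fix y
      have "Ltilde b c m u y + \<alpha> * u y = 0" using H by blast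
      thus "Ltilde b c m (\<lambda>x. - u x) y + \<alpha> * - u y \<ge> 0"
        using Lneg[of y] by linarith
    qed
  qed
  ultimately show "u x = 0" by simp
qed

end
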